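(* Let $G$ be a finite group with $R(G) \neq 1$. Then $|\mathrm{Solv}(G)| = |\mathrm{Solv}(G/R(G))|$.
   Context: $R(G)$ denotes the solvable radical of $G$, the largest solvable normal subgroup of $G$. For a finite group $G$ and $x \in G$, the solvabilizer of $x$ in $G$ is $\mathrm{Sol}_G(x) = \{y \in G : \langle x, y \rangle \text{ is solvable}\}$. $\mathrm{Solv}(G) = \{\mathrm{Sol}_G(x) : x \in G\}$ is the set of distinct solvabilizers of elements of $G$. *)

theory Defs
  imports "HOL-Algebra.Algebra"
begin

definition solvable_radical :: "('a, 'b) monoid_scheme \<Rightarrow> 'a set" where
  "solvable_radical G = (THE N. N \<lhd> G \<and> solvable (G\<lparr>carrier := N\<rparr>) \<and>
      (\<forall>M. M \<lhd> G \<and> solvable (G\<lparr>carrier := M\<rparr>) \<longrightarrow> M \<subseteq> N))"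

definition solvabilizer :: "('a, 'b) monoid_scheme \<Rightarrow> 'a \<Rightarrow> 'a set" where
  "solvabilizer G x = {y \<in> carrier G. solvable (subgroup_generated G {x, y})}"

definition Solv :: "('a, 'b) monoid_scheme \<Rightarrow> 'a set set" where
  "Solv G = solvabilizer G ` carrier G"

end

theory Submission
  imports Defs
begin

lemma solv_iff:
  fixes G :: "('a, 'b) monoid_scheme" (structure)
  assumes "group G" "subgroup H G"
  shows "solvable (G\<lparr>carrier := H\<rparr>) \<longleftrightarrow> (\<exists>n. (derived G ^^ n) H = {\<one>\<^bsub>G\<^esub>})"
proof -
  interpret group G by fact
  have grp: "group (G\<lparr>carrier := H\<rparr>)" using subgroup_imp_group[OF assms(2)] .
  have eq: "(derived (G\<lparr>carrier := H\<rparr>) ^^ n) H = (derived G ^^ n) H \<and> (derived G ^^ n) H \<subseteq> H" for n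
  proof (induction n)
    case 0 then show ?case by simp
  next
    case (Suc n)
    then show ?case
      using derived_consistent[OF _ assms(2)] derived_incl[OF _ assms(2)] by simp
  qed
  show ?thesis
    using group.solvable_iff_trivial_derived_seq[OF grp] eq by simp
qed

lemma derived_pow_one:
  fixes G :: "('a, 'b) monoid_scheme" (structure)
  assumes "group G" "subgroup H G"
  shows "\<one>\<^bsub>G\<^esub> \<in> (derived G ^^ n) H"
  using subgroup.one_closed[OF group.exp_of_derived_is_subgroup[OF assms]] .

lemma kernel_rcos:
  fixes G :: "('a, 'b) monoid_scheme" (structure)
  assumes "group G" "N \<lhd> G" "x \<in> carrier G" "r_coset G N x = N"
  shows "x \<in> N"
  using group.rcos_self[OF assms(1) assms(3) normal_imp_subgroup[OF assms(2)]] assms(4) by simp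

lemma img_one_iff:
  fixes G :: "('a, 'b) monoid_scheme" (structure)
  assumes "group G" "N \<lhd> G" "Y \<subseteq> carrier G" "Y \<noteq> {}"
  shows "((\<lambda>x. r_coset G N x) ` Y = {N}) \<longleftrightarrow> Y \<subseteq> N"
proof -
  interpret normal N G by fact
  interpret group G by fact
  have "N #> x = N \<longleftrightarrow> x \<in> N" if "x \<in> carrier G" for x
    using kernel_rcos[OF assms(1,2) that] rcos_const[OF assms(1)] by blast
  then show ?thesis using assms(3,4) by auto
qed

lemma solv_prod:
  fixes G :: "('a, 'b) monoid_scheme" (structure)
  assumes "group G" "N1 \<lhd> G" "N2 \<lhd> G"
    and "(derived G ^^ k) N1 = {\<one>\<^bsub>G\<^esub>}" and "(derived G ^^ m) N2 = {\<one>\<^bsub>G\<^esub>}"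
  shows "(derived G ^^ (k + m)) (N1 <#>\<^bsub>G\<^esub> N2) = {\<one>\<^bsub>G\<^esub>}"
proof -
  interpret group G by fact
  interpret n1: normal N1 G by fact
  interpret n2: normal N2 G by fact
  interpret h: group_hom G "G Mod N1" "\<lambda>x. N1 #> x"
    using n1.r_coset_hom_Mod n1.factorgroup_is_group by (simp add: group_hom_def group_hom_axioms_def is_group)
  have P: "N1 <#> N2 \<lhd> G" using normal_subgroup_set_mult_closed assms by blast
  have Psub: "subgroup (N1 <#> N2) G" using P normal_imp_subgroup by blast
  have Pc: "N1 <#> N2 \<subseteq> carrier G" using Psub subgroup.subset by blast
  have img: "(\<lambda>x. N1 #> x) ` (N1 <#> N2) \<subseteq> (\<lambda>x. N1 #> x) ` N2"
  proof
    fix z assume "z \<in> (\<lambda>x. N1 #> x) ` (N1 <#> N2)"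
    then obtain a b where ab: "a \<in> N1" "b \<in> N2" "z = N1 #> (a \<otimes> b)"
      unfolding set_mult_def by blast
    have "N1 #> (a \<otimes> b) = (N1 #> a) #> b"
      using ab coset_mult_assoc n1.subset n2.subset by auto
    also have "\<dots> = N1 #> b" using n1.rcos_const[OF is_group ab(1)] by simp
    finally show "z \<in> (\<lambda>x. N1 #> x) ` N2" using ab by auto
  qed
  have "(derived (G Mod N1) ^^ m) ((\<lambda>x. N1 #> x) ` (N1 <#> N2))
        \<subseteq> (derived (G Mod N1) ^^ m) ((\<lambda>x. N1 #> x) ` N2)"
    using h.H.mono_exp_of_derived[OF img] .
  also have "\<dots> = (\<lambda>x. N1 #> x) ` ((derived G ^^ m) N2)"
    using h.exp_of_derived_img n2.subset by blast
  also have "\<dots> = {N1}" using assms(5) by simp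
  finally have "(\<lambda>x. N1 #> x) ` ((derived G ^^ m) (N1 <#> N2)) \<subseteq> {N1}"
    using h.exp_of_derived_img[OF Pc] by simp
  moreover have "\<one> \<in> (derived G ^^ m) (N1 <#> N2)" using derived_pow_one[OF is_group Psub] .
  ultimately have "(\<lambda>x. N1 #> x) ` ((derived G ^^ m) (N1 <#> N2)) = {N1}" by blast
  then have sub: "(derived G ^^ m) (N1 <#> N2) \<subseteq> N1"
    using img_one_iff[OF is_group assms(2) exp_of_derived_in_carrier[OF Pc]] derived_pow_one[OF is_group Psub]
    by (metis empty_iff)
  have "(derived G ^^ (k + m)) (N1 <#> N2) = (derived G ^^ k) ((derived G ^^ m) (N1 <#> N2))"
    by (simp add: funpow_add)
  also have "\<dots> \<subseteq> (derived G ^^ k) N1" using mono_exp_of_derived[OF sub] .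
  finally show ?thesis using assms(4) derived_pow_one[OF is_group Psub] by blast
qed

lemma radical_props:
  fixes G :: "('a, 'b) monoid_scheme" (structure)
  assumes grp: "group G" and fin: "finite (carrier G)"
  shows "solvable_radical G \<lhd> G \<and> solvable (G\<lparr>carrier := solvable_radical G\<rparr>)"
proof -
  interpret group G by fact
  define P where "P M \<longleftrightarrow> M \<lhd> G \<and> solvable (G\<lparr>carrier := M\<rparr>)" for M
  have P_iff: "P M \<longleftrightarrow> M \<lhd> G \<and> (\<exists>n. (derived G ^^ n) M = {\<one>})" for M
    unfolding P_def using solv_iff[OF grp] normal_imp_subgroup by blast
  have P1: "P {\<one>}" unfolding P_iff using one_is_normal by (metis funpow_0)
  have Pb: "\<forall>y. P y \<longrightarrow> card y < Suc (card (carrier G))"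
  proof (intro allI impI)
    fix y assume "P y"
    then have "y \<subseteq> carrier G" unfolding P_def using normal_imp_subgroup subgroup.subset by blast
    then show "card y < Suc (card (carrier G))" using card_mono[OF fin] by (simp add: le_imp_less_Suc)
  qed
  obtain N where PN: "P N" and Nmax: "\<forall>y. P y \<longrightarrow> card y \<le> card N"
    using ex_has_greatest_nat[OF P1 Pb] by blast
  have Nc: "N \<subseteq> carrier G" using PN unfolding P_def using normal_imp_subgroup subgroup.subset by blast
  have big: "M \<subseteq> N" if PM: "P M" for M
  proof -
    from PN obtain k where k: "(derived G ^^ k) N = {\<one>}" and nN: "N \<lhd> G" unfolding P_iff by blast
    from PM obtain m where m: "(derived G ^^ m) M = {\<one>}" and nM: "M \<lhd> G" unfolding P_iff by blast
    have PNM: "P (N <#> M)" unfolding P_iff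
      using normal_subgroup_set_mult_closed[OF nN nM] solv_prod[OF grp nN nM k m] by blast
    have sNM: "subgroup (N <#> M) G" using PNM unfolding P_def using normal_imp_subgroup by blast
    have NMc: "N <#> M \<subseteq> carrier G" using sNM subgroup.subset by blast
    have Mc: "M \<subseteq> carrier G" using nM normal_imp_subgroup subgroup.subset by blast
    have "N \<subseteq> N <#> M"
    proof
      fix n assume "n \<in> N"
      then have "n = n \<otimes> \<one>" using Nc by auto
      moreover have "\<one> \<in> M" using nM normal_imp_subgroup subgroup.one_closed by blast
      ultimately show "n \<in> N <#> M" unfolding set_mult_def using \<open>n \<in> N\<close> by blast
    qed
    moreover have "card (N <#> M) \<le> card N" using Nmax PNM by blast
    moreover have "finite (N <#> M)" using NMc fin finite_subset by blast
    ultimately have eq: "N <#> M = N" using card_seteq by blast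
    have "M \<subseteq> N <#> M"
    proof
      fix n assume "n \<in> M"
      then have "n = \<one> \<otimes> n" using Mc by auto
      moreover have "\<one> \<in> N" using nN normal_imp_subgroup subgroup.one_closed by blast
      ultimately show "n \<in> N <#> M" unfolding set_mult_def using \<open>n \<in> M\<close> by blast
    qed
    then show ?thesis using eq by simp
  qed
  have ex1: "\<exists>!N. P N \<and> (\<forall>M. P M \<longrightarrow> M \<subseteq> N)"
  proof (rule ex1I[of _ N])
    show "P N \<and> (\<forall>M. P M \<longrightarrow> M \<subseteq> N)" using PN big by blast
  next
    fix N' assume "P N' \<and> (\<forall>M. P M \<longrightarrow> M \<subseteq> N')"
    then show "N' = N" using PN big by blast
  qed
  have "P (solvable_radical G)"
    using theI'[OF ex1] unfolding solvable_radical_def P_def conj_assoc by blast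
  then show ?thesis unfolding P_def .
qed

lemma key_equiv:
  fixes G :: "('a, 'b) monoid_scheme" (structure)
  assumes grp: "group G" and nR: "R \<lhd> G" and kR: "(derived G ^^ k) R = {\<one>}"
    and x: "x \<in> carrier G" and y: "y \<in> carrier G"
  shows "solvable (subgroup_generated G {x, y}) \<longleftrightarrow>
         solvable (subgroup_generated (G Mod R) {R #> x, R #> y})"
proof -
  interpret group G by fact
  interpret nr: normal R G by fact
  let ?Q = "G Mod R"
  interpret h: group_hom G ?Q "\<lambda>z. R #> z"
    using nr.r_coset_hom_Mod nr.factorgroup_is_group by (simp add: group_hom_def group_hom_axioms_def is_group)
  define H where "H = generate G {x, y}"
  have xy: "{x, y} \<subseteq> carrier G" using x y by simp
  have sH: "subgroup H G" unfolding H_def using generate_is_subgroup[OF xy] .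
  have Hc: "H \<subseteq> carrier G" using sH subgroup.subset by blast
  have e1: "subgroup_generated G {x, y} = G\<lparr>carrier := H\<rparr>"
    unfolding subgroup_generated_def H_def using xy by (simp add: Int_absorb1)
  have img: "(\<lambda>z. R #> z) ` {x, y} = {R #> x, R #> y}" by simp
  have hxy: "{R #> x, R #> y} \<subseteq> carrier ?Q" using img h.hom_closed x y by auto
  have gimg: "generate ?Q {R #> x, R #> y} = (\<lambda>z. R #> z) ` H"
    unfolding H_def using h.generate_img[OF xy] img by simp
  have e2: "subgroup_generated ?Q {R #> x, R #> y} = ?Q\<lparr>carrier := (\<lambda>z. R #> z) ` H\<rparr>"
    unfolding subgroup_generated_def using hxy gimg by (simp add: Int_absorb1)
  have sHQ: "subgroup ((\<lambda>z. R #> z) ` H) ?Q" using h.subgroup_img_is_subgroup[OF sH] .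
  have L: "solvable (subgroup_generated G {x, y}) \<longleftrightarrow> (\<exists>n. (derived G ^^ n) H = {\<one>})"
    unfolding e1 using solv_iff[OF grp sH] .
  have "solvable (subgroup_generated ?Q {R #> x, R #> y}) \<longleftrightarrow>
        (\<exists>n. (derived ?Q ^^ n) ((\<lambda>z. R #> z) ` H) = {\<one>\<^bsub>?Q\<^esub>})"
    unfolding e2 using solv_iff[OF h.H.is_group sHQ] .
  also have "\<dots> \<longleftrightarrow> (\<exists>n. (\<lambda>z. R #> z) ` ((derived G ^^ n) H) = {R})"
    using h.exp_of_derived_img[OF Hc] by simp
  also have "\<dots> \<longleftrightarrow> (\<exists>n. (derived G ^^ n) H \<subseteq> R)"
  proof -
    have "(\<lambda>z. R #> z) ` ((derived G ^^ n) H) = {R} \<longleftrightarrow> (derived G ^^ n) H \<subseteq> R" for n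
    proof -
      have ne: "(derived G ^^ n) H \<noteq> {}" using derived_pow_one[OF grp sH] by blast
      show ?thesis using img_one_iff[OF grp nR exp_of_derived_in_carrier[OF Hc] ne] by simp
    qed
    then show ?thesis by simp
  qed
  also have "\<dots> \<longleftrightarrow> (\<exists>n. (derived G ^^ n) H = {\<one>})"
  proof
    assume "\<exists>n. (derived G ^^ n) H \<subseteq> R"
    then obtain n where n: "(derived G ^^ n) H \<subseteq> R" by blast
    have "(derived G ^^ (k + n)) H = (derived G ^^ k) ((derived G ^^ n) H)"
      by (simp add: funpow_add)
    also have "\<dots> \<subseteq> (derived G ^^ k) R" using mono_exp_of_derived[OF n] .
    finally have "(derived G ^^ (k + n)) H = {\<one>}" using kR derived_pow_one[OF grp sH] by blast
    then show "\<exists>n. (derived G ^^ n) H = {\<one>}" by blast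
  next
    assume "\<exists>n. (derived G ^^ n) H = {\<one>}"
    then obtain n where "(derived G ^^ n) H = {\<one>}" by blast
    moreover have "\<one> \<in> R" using nr.subgroup_axioms subgroup.one_closed by blast
    ultimately have "(derived G ^^ n) H \<subseteq> R" by simp
    then show "\<exists>n. (derived G ^^ n) H \<subseteq> R" by blast
  qed
  finally show ?thesis using L by simp
qed

theorem lemma2p6:
  fixes G :: "('a, 'b) monoid_scheme"
  assumes "group G" and "finite (carrier G)"
    and "solvable_radical G \<noteq> {\<one>\<^bsub>G\<^esub>}"
  shows "card (Solv G) = card (Solv (G Mod solvable_radical G))"
proof -
  interpret group G by fact
  define R where "R = solvable_radical G"
  have nR: "R \<lhd> G" and sR: "solvable (G\<lparr>carrier := R\<rparr>)"
    using radical_props[OF assms(1,2)] unfolding R_def by auto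
  interpret nr: normal R G by fact
  obtain k where kR: "(derived G ^^ k) R = {\<one>\<^bsub>G\<^esub>}"
    using sR solv_iff[OF assms(1) normal_imp_subgroup[OF nR]] by blast
  let ?Q = "G Mod R"
  let ?h = "\<lambda>z. r_coset G R z"
  interpret h: group_hom G ?Q ?h
    using nr.r_coset_hom_Mod nr.factorgroup_is_group by (simp add: group_hom_def group_hom_axioms_def is_group)
  have surj: "?h ` carrier G = carrier ?Q" by (simp add: carrier_FactGroup)
  define pre where "pre S = {y \<in> carrier G. ?h y \<in> S}" for S
  have sol: "solvabilizer G x = pre (solvabilizer ?Q (?h x))" if x: "x \<in> carrier G" for x
    unfolding solvabilizer_def pre_def
    using key_equiv[OF assms(1) nR kR x] h.hom_closed by auto
  have SG: "Solv G = pre ` Solv ?Q"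
  proof -
    have "Solv G = (\<lambda>x. pre (solvabilizer ?Q (?h x))) ` carrier G"
      unfolding Solv_def using sol by (simp add: image_def)
    also have "\<dots> = pre ` (solvabilizer ?Q ` (?h ` carrier G))" by (simp add: image_image)
    also have "\<dots> = pre ` Solv ?Q" unfolding Solv_def surj ..
    finally show ?thesis .
  qed
  have inv: "?h ` pre S = S" if "S \<subseteq> carrier ?Q" for S
  proof
    show "?h ` pre S \<subseteq> S" unfolding pre_def by auto
  next
    show "S \<subseteq> ?h ` pre S"
    proof
      fix s assume "s \<in> S"
      then have "s \<in> ?h ` carrier G" using that surj by blast
      then obtain y where "y \<in> carrier G" "s = ?h y" by blast
      then show "s \<in> ?h ` pre S" unfolding pre_def using \<open>s \<in> S\<close> by blast
    qed
  qed
  have "inj_on pre (Solv ?Q)"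
  proof (rule inj_onI)
    fix S T assume "S \<in> Solv ?Q" "T \<in> Solv ?Q" "pre S = pre T"
    have Sc: "S \<subseteq> carrier ?Q" and Tc: "T \<subseteq> carrier ?Q"
      using \<open>S \<in> Solv ?Q\<close> \<open>T \<in> Solv ?Q\<close> unfolding Solv_def solvabilizer_def by auto
    have "S = ?h ` pre S" using inv[OF Sc] by (rule sym)
    also have "\<dots> = ?h ` pre T" using \<open>pre S = pre T\<close> by (rule arg_cong)
    also have "\<dots> = T" using inv[OF Tc] .
    finally show "S = T" .
  qed
  then have "card (pre ` Solv ?Q) = card (Solv ?Q)" by (rule card_image)
  then have "card (Solv G) = card (Solv ?Q)" unfolding SG .
  then show ?thesis unfolding R_def .
qed

end
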